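(* Fix $k\ge2$ and assume $\mathbb{E} Z<\infty$. Let $L_\infty=\inf_{n\in\mathbb{N}}L_n$ in the $k$-choice model. Then $L_\infty$ is finite almost surely, and consequently the sequences $(R_n)_{n\ge1}$, $(L_n)_{n\ge1}$, $(\Lambda_n)_{n\ge1}$ are almost surely bounded.
   Context: Let $Z$ be a random variable on $\mathbb{N}=\{1,2,3,\dots\}$. Fix $k\ge2$ and let $(Z^{(1)}_n)_{n\ge1},\dots,(Z^{(k)}_n)_{n\ge1}$ be $k$ independent sequences of i.i.d. random variables, all distributed as $Z$ and mutually independent. The $k$-choice model: define $T_n=\{n\}$ for $n\le0$ and $T_n=\{n\}\cup\bigcup_{i=1}^k T_{n-Z^{(i)}_n}$ for $n\ge1$. Let $\mathcal{L}_n=T_n\cap\{0,-1,-2,\dots\}$, $R_n=\max\mathcal{L}_n$, $L_n=\min\mathcal{L}_n$, $\Lambda_n=|\mathcal{L}_n|$. *)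

theory Defs
  imports "HOL-Probability.Probability"
begin

text \<open>The k-choice tree.  z i m is the value Z^(i)_m (only m \<ge> 1 and i < k are used).
  T_n is the smallest set containing n and, with every positive element m, all
  points m - Z^(i)_m for i < k; this is exactly the unfolding of the recursion
  T_n = {n} for n \<le> 0 and T_n = {n} \<union> \<Union>_i T_(n - Z^(i)_n) for n \<ge> 1.\<close>

inductive_set kTree :: "nat \<Rightarrow> (nat \<Rightarrow> nat \<Rightarrow> nat) \<Rightarrow> int \<Rightarrow> int set"
  for k :: nat and z :: "nat \<Rightarrow> nat \<Rightarrow> nat" and n :: int where
  root: "n \<in> kTree k z n"
| step: "m \<in> kTree k z n \<Longrightarrow> m \<ge> 1 \<Longrightarrow> i < k \<Longrightarrow> m - int (z i (nat m)) \<in> kTree k z n"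

definition kLeaves :: "nat \<Rightarrow> (nat \<Rightarrow> nat \<Rightarrow> nat) \<Rightarrow> int \<Rightarrow> int set" where
  "kLeaves k z n = kTree k z n \<inter> {..0}"

definition kR :: "nat \<Rightarrow> (nat \<Rightarrow> nat \<Rightarrow> nat) \<Rightarrow> int \<Rightarrow> int" where
  "kR k z n = Max (kLeaves k z n)"

definition kL :: "nat \<Rightarrow> (nat \<Rightarrow> nat \<Rightarrow> nat) \<Rightarrow> int \<Rightarrow> int" where
  "kL k z n = Min (kLeaves k z n)"

definition kLambda :: "nat \<Rightarrow> (nat \<Rightarrow> nat \<Rightarrow> nat) \<Rightarrow> int \<Rightarrow> nat" where
  "kLambda k z n = card (kLeaves k z n)"

end

theory Submission imports Defs begin

lemma tail_summable:
  fixes p :: "nat pmf"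
  assumes int: "integrable (measure_pmf p) real"
  shows "summable (\<lambda>m. measure_pmf.prob p {x. Suc m < x})"
proof (rule bounded_imp_summable)
  fix n
  have "(\<Sum>m\<le>n. measure_pmf.prob p {x. Suc m < x})
      = (\<Sum>m\<le>n. measure_pmf.expectation p (indicator {x. Suc m < x}))"
    by simp
  also have "\<dots> = measure_pmf.expectation p (\<lambda>x. \<Sum>m\<le>n. indicator {x. Suc m < x} x)"
    by (rule Bochner_Integration.integral_sum[symmetric]) (auto intro!: measure_pmf.integrable_const_bound[where B=1])
  also have "\<dots> \<le> measure_pmf.expectation p real"
  proof (rule integral_mono)
    show "integrable (measure_pmf p) (\<lambda>x. \<Sum>m\<le>n. indicator {x. Suc m < x} x :: real)"
      by (intro measure_pmf.integrable_const_bound[where B="real (Suc n)"] AE_I2)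
         (auto simp: abs_of_nonneg sum_nonneg intro!: order.trans[OF sum_bounded_above[where K=1]])
    show "integrable (measure_pmf p) real" by fact
    fix x :: nat
    have "(\<Sum>m\<le>n. indicator {x. Suc m < x} x :: real) = real (card {m. m \<le> n \<and> Suc m < x})"
      by (simp add: indicator_def sum.If_cases Collect_conj_eq atMost_def Int_commute)
    also have "\<dots> \<le> real (card {..<x})"
      by (intro of_nat_mono card_mono) auto
    finally show "(\<Sum>m\<le>n. indicator {x. Suc m < x} x :: real) \<le> real x" by simp
  qed
  finally show "(\<Sum>m\<le>n. measure_pmf.prob p {x. Suc m < x}) \<le> measure_pmf.expectation p real" .
qed simp
lemma AE_bound_one:
  fixes M :: "'a measure" and p :: "nat pmf" and X :: "nat \<Rightarrow> 'a \<Rightarrow> nat"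
  assumes P: "prob_space M"
    and int: "integrable (measure_pmf p) real"
    and meas: "\<And>n. X n \<in> measurable M (count_space UNIV)"
    and dist: "\<And>n. n \<ge> 1 \<Longrightarrow> distr M (count_space UNIV) (X n) = measure_pmf p"
  shows "AE \<omega> in M. \<exists>B::nat. \<forall>m\<ge>1. X m \<omega> \<le> m + B"
proof -
  interpret prob_space M by fact
  define A where "A m = X (Suc m) -` {x. Suc m < x} \<inter> space M" for m
  have Asets: "A m \<in> sets M" for m
    unfolding A_def by (rule measurable_sets[OF meas]) auto
  have Ameas: "measure M (A m) = measure_pmf.prob p {x. Suc m < x}" for m
    using measure_distr[OF meas, of "{x. Suc m < x}" "Suc m"] dist[of "Suc m"] by (simp add: A_def)
  have "AE \<omega> in M. eventually (\<lambda>m. \<omega> \<in> space M - A m) sequentially"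
    by (rule borel_cantelli_AE1) (use Asets Ameas tail_summable[OF int] in \<open>auto simp: emeasure_eq_measure\<close>)
  then show ?thesis
  proof (rule AE_mp, intro AE_I2 impI)
    fix \<omega> assume w: "\<omega> \<in> space M" and ev: "eventually (\<lambda>m. \<omega> \<in> space M - A m) sequentially"
    then obtain N where N: "\<And>m. m \<ge> N \<Longrightarrow> \<omega> \<notin> A m" by (auto simp: eventually_sequentially)
    define B where "B = Max ((\<lambda>m. X (Suc m) \<omega>) ` {..N})"
    show "\<exists>B::nat. \<forall>m\<ge>1. X m \<omega> \<le> m + B"
    proof (intro exI allI impI)
      fix m :: nat assume "m \<ge> 1"
      then obtain j where j: "m = Suc j" by (cases m) auto
      show "X m \<omega> \<le> m + B"
      proof (cases "j \<le> N")
        case True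
        then have "X (Suc j) \<omega> \<le> B" unfolding B_def by (intro Max_ge) auto
        then show ?thesis using j by simp
      next
        case False
        then have "\<omega> \<notin> A j" using N by auto
        then show ?thesis using w j by (auto simp: A_def)
      qed
    qed
  qed
qed
lemma kTree_bounds:
  assumes zb: "\<And>i m. i < k \<Longrightarrow> m \<ge> 1 \<Longrightarrow> z i m \<le> m + B" and n: "n \<ge> 1"
  shows "kTree k z n \<subseteq> {- int B .. n}"
proof
  fix x assume "x \<in> kTree k z n"
  then show "x \<in> {- int B .. n}"
  proof induction
    case root then show ?case using n by auto
  next
    case (step m i)
    have "z i (nat m) \<le> nat m + B" using zb[of i "nat m"] step by auto
    then show ?case using step by auto
  qed
qed

lemma leaves_bounds:
  assumes zb: "\<And>i m. i < k \<Longrightarrow> m \<ge> 1 \<Longrightarrow> z i m \<le> m + B" and n: "n \<ge> 1"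
  shows "kLeaves k z n \<subseteq> {- int B .. 0}"
proof -
  have "kTree k z n \<subseteq> {- int B .. n}" by (rule kTree_bounds[OF zb n])
  then show ?thesis unfolding kLeaves_def by auto
qed

lemma kL_bound:
  assumes zb: "\<And>i m. i < k \<Longrightarrow> m \<ge> 1 \<Longrightarrow> z i m \<le> m + B" and n: "n \<ge> 1"
  shows "\<bar>kL k z n\<bar> \<le> int B + \<bar>Min ({}::int set)\<bar>"
proof (cases "kLeaves k z n = {}")
  case True then show ?thesis by (simp add: kL_def)
next
  case False
  have sub: "kLeaves k z n \<subseteq> {- int B .. 0}" by (rule leaves_bounds[OF zb n])
  have fin: "finite (kLeaves k z n)" using sub finite_subset by blast
  have "Min (kLeaves k z n) \<in> kLeaves k z n" using Min_in[OF fin False] .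
  then show ?thesis using sub by (force simp: kL_def)
qed

lemma kR_bound:
  assumes zb: "\<And>i m. i < k \<Longrightarrow> m \<ge> 1 \<Longrightarrow> z i m \<le> m + B" and n: "n \<ge> 1"
  shows "\<bar>kR k z n\<bar> \<le> int B + \<bar>Max ({}::int set)\<bar>"
proof (cases "kLeaves k z n = {}")
  case True then show ?thesis by (simp add: kR_def)
next
  case False
  have sub: "kLeaves k z n \<subseteq> {- int B .. 0}" by (rule leaves_bounds[OF zb n])
  have fin: "finite (kLeaves k z n)" using sub finite_subset by blast
  have "Max (kLeaves k z n) \<in> kLeaves k z n" using Max_in[OF fin False] .
  then show ?thesis using sub by (force simp: kR_def)
qed

lemma kLambda_bound:
  assumes zb: "\<And>i m. i < k \<Longrightarrow> m \<ge> 1 \<Longrightarrow> z i m \<le> m + B" and n: "n \<ge> 1"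
  shows "kLambda k z n \<le> B + 1"
proof -
  have "kLambda k z n \<le> card {- int B .. 0}"
    unfolding kLambda_def by (rule card_mono[OF _ leaves_bounds[OF zb n]]) auto
  then show ?thesis by simp
qed

theorem mainTheorem14:
  fixes M :: "'a measure" and k :: nat and p :: "nat pmf"
    and Z :: "nat \<Rightarrow> nat \<Rightarrow> 'a \<Rightarrow> nat"
  assumes "prob_space M"
    and "k \<ge> 2"
    and "set_pmf p \<subseteq> {1..}"
    and "integrable (measure_pmf p) real"
    and "\<And>i n. Z i n \<in> measurable M (count_space UNIV)"
    and "prob_space.indep_vars M (\<lambda>_. count_space UNIV) (\<lambda>(i, n). Z i n) ({..<k} \<times> {1..})"
    and "\<And>i n. i < k \<Longrightarrow> n \<ge> 1 \<Longrightarrow> distr M (count_space UNIV) (Z i n) = measure_pmf p"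
  shows "AE \<omega> in M.
           bdd_below ((\<lambda>n. kL k (\<lambda>i m. Z i m \<omega>) (int n)) ` {1..})
         \<and> bounded (range (\<lambda>n::nat. real_of_int (kR k (\<lambda>i m. Z i m \<omega>) (int (Suc n)))))
         \<and> bounded (range (\<lambda>n::nat. real_of_int (kL k (\<lambda>i m. Z i m \<omega>) (int (Suc n)))))
         \<and> bounded (range (\<lambda>n::nat. real (kLambda k (\<lambda>i m. Z i m \<omega>) (int (Suc n)))))"
proof -
  have "\<forall>i\<in>{..<k}. AE \<omega> in M. \<exists>B::nat. \<forall>m\<ge>1. Z i m \<omega> \<le> m + B"
  proof
    fix i assume "i \<in> {..<k}"
    then show "AE \<omega> in M. \<exists>B::nat. \<forall>m\<ge>1. Z i m \<omega> \<le> m + B"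
      by (intro AE_bound_one[OF assms(1) assms(4) assms(5)] assms(7)) auto
  qed
  then have "AE \<omega> in M. \<forall>i\<in>{..<k}. \<exists>B::nat. \<forall>m\<ge>1. Z i m \<omega> \<le> m + B"
    by (subst AE_ball_countable) auto
  then show ?thesis
  proof (rule AE_mp, intro AE_I2 impI)
    fix \<omega> assume "\<forall>i\<in>{..<k}. \<exists>B::nat. \<forall>m\<ge>1. Z i m \<omega> \<le> m + B"
    then obtain Bf where Bf: "\<And>i m. i < k \<Longrightarrow> m \<ge> 1 \<Longrightarrow> Z i m \<omega> \<le> m + Bf i"
      by (metis lessThan_iff)
    define B where "B = (\<Sum>i<k. Bf i)"
    have zb: "\<And>i m. i < k \<Longrightarrow> m \<ge> 1 \<Longrightarrow> Z i m \<omega> \<le> m + B"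
    proof -
      fix i m assume "i < k" "m \<ge> (1::nat)"
      have "Bf i \<le> B" unfolding B_def using \<open>i < k\<close>
        by (intro member_le_sum) auto
      then show "Z i m \<omega> \<le> m + B" using Bf[OF \<open>i < k\<close> \<open>m \<ge> 1\<close>] by simp
    qed
    let ?z = "\<lambda>i m. Z i m \<omega>"
    have L: "\<bar>kL k ?z (int n)\<bar> \<le> int B + \<bar>Min ({}::int set)\<bar>" if "n \<ge> 1" for n :: nat
      by (rule kL_bound[OF zb]) (use that in auto)
    have R: "\<bar>kR k ?z (int (Suc n))\<bar> \<le> int B + \<bar>Max ({}::int set)\<bar>" for n
      by (rule kR_bound[OF zb]) auto
    have La: "kLambda k ?z (int (Suc n)) \<le> B + 1" for n
      by (rule kLambda_bound[OF zb]) auto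
    show "bdd_below ((\<lambda>n. kL k ?z (int n)) ` {1..})
         \<and> bounded (range (\<lambda>n::nat. real_of_int (kR k ?z (int (Suc n)))))
         \<and> bounded (range (\<lambda>n::nat. real_of_int (kL k ?z (int (Suc n)))))
         \<and> bounded (range (\<lambda>n::nat. real (kLambda k ?z (int (Suc n)))))"
    proof (intro conjI)
      show "bdd_below ((\<lambda>n. kL k ?z (int n)) ` {1..})"
        unfolding bdd_below_def using L
        by (intro exI[of _ "- (int B + \<bar>Min ({}::int set)\<bar>)"]) (force simp: abs_le_iff)
      show "bounded (range (\<lambda>n::nat. real_of_int (kR k ?z (int (Suc n)))))"
        unfolding bounded_iff
      proof (intro exI ballI)
        fix x assume "x \<in> range (\<lambda>n::nat. real_of_int (kR k ?z (int (Suc n))))"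
        then obtain n where "x = real_of_int (kR k ?z (int (Suc n)))" by auto
        then show "norm x \<le> real_of_int (int B + \<bar>Max ({}::int set)\<bar>)"
          using R[of n] by (simp only: real_norm_def)
      qed
      show "bounded (range (\<lambda>n::nat. real_of_int (kL k ?z (int (Suc n)))))"
        unfolding bounded_iff
      proof (intro exI ballI)
        fix x assume "x \<in> range (\<lambda>n::nat. real_of_int (kL k ?z (int (Suc n))))"
        then obtain n where "x = real_of_int (kL k ?z (int (Suc n)))" by auto
        then show "norm x \<le> real_of_int (int B + \<bar>Min ({}::int set)\<bar>)"
          using L[of "Suc n"] by (simp only: real_norm_def) linarith
      qed
      show "bounded (range (\<lambda>n::nat. real (kLambda k ?z (int (Suc n)))))"
        unfolding bounded_iff
      proof (intro exI ballI)
        fix x assume "x \<in> range (\<lambda>n::nat. real (kLambda k ?z (int (Suc n))))"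
        then obtain n where "x = real (kLambda k ?z (int (Suc n)))" by auto
        then show "norm x \<le> real (B + 1)"
          using La[of n] by simp
      qed
    qed
  qed
qed

end
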